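(* Let $f\in\mathbb{R}[x,y]$ be a polynomial of degree $n\ge 3$. Then, for $k=1,2$, the set of singular points at infinity of $\mathbb{Y}_k$ is $\{(u,v,0)\in\mathbb{S}^2: f_n(u,v)=0\}$.
   Context: Write $f=\sum_{i=0}^n f_i$ with $f_i$ homogeneous of degree $i$, $F(u,v,\omega)=\sum_{i=0}^n\omega^{n-i}f_i(u,v)$, $A=-uF_{uu}-vF_{uv}$, $B=-uF_{uv}-vF_{vv}$, $S=u^2F_{uu}+2uvF_{uv}+v^2F_{vv}$, and let $Q=\omega^2F_{uu}du^2+2\omega^2F_{uv}du\,dv+\omega^2F_{vv}dv^2+2\omega A\,du\,d\omega+2\omega B\,dv\,d\omega+S\,d\omega^2$ restricted to the unit sphere $\mathbb{S}^2\subset\mathbb{R}^3=\{(u,v,\omega)\}$ (the analytic extension to the Poincaré sphere of the second fundamental form $f_{xx}dx^2+2f_{xy}dxdy+f_{yy}dy^2$). $\mathbb{Y}_1,\mathbb{Y}_2$ are the two fields of lines on $\mathbb{S}^2$ given by $Q_p(\xi,\xi)=0$, $\xi\in T_p\mathbb{S}^2$. A singular point of $\mathbb{Y}_k$ is a point $p$ where the restriction of $Q_p$ to $T_p\mathbb{S}^2$ vanishes identically; a singular point at infinity is one lying on the equator $\{\omega=0\}$. *)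

theory Defs
  imports "HOL-Analysis.Analysis"
begin

text \<open>A real polynomial f in R[x,y] is represented by its coefficient function c:
  f(x,y) = sum of c i j * x^i * y^j.\<close>

definition poly2_degree :: "(nat \<Rightarrow> nat \<Rightarrow> real) \<Rightarrow> nat \<Rightarrow> bool" where
  "poly2_degree c n \<longleftrightarrow> (\<forall>i j. n < i + j \<longrightarrow> c i j = 0) \<and> (\<exists>i j. i + j = n \<and> c i j \<noteq> 0)"

definition fhom :: "(nat \<Rightarrow> nat \<Rightarrow> real) \<Rightarrow> nat \<Rightarrow> real \<Rightarrow> real \<Rightarrow> real" where
  "fhom c k u v = (\<Sum>i\<le>k. c i (k - i) * u ^ i * v ^ (k - i))"

definition Fext :: "(nat \<Rightarrow> nat \<Rightarrow> real) \<Rightarrow> nat \<Rightarrow> real \<Rightarrow> real \<Rightarrow> real \<Rightarrow> real" where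
  "Fext c n u v w = (\<Sum>k\<le>n. w ^ (n - k) * fhom c k u v)"

definition F_uu where
  "F_uu c n u v w = deriv (\<lambda>s. deriv (\<lambda>t. Fext c n t v w) s) u"
definition F_uv where
  "F_uv c n u v w = deriv (\<lambda>s. deriv (\<lambda>t. Fext c n t s w) u) v"
definition F_vv where
  "F_vv c n u v w = deriv (\<lambda>s. deriv (\<lambda>t. Fext c n u t w) s) v"

definition A_coef where
  "A_coef c n u v w = - u * F_uu c n u v w - v * F_uv c n u v w"
definition B_coef where
  "B_coef c n u v w = - u * F_uv c n u v w - v * F_vv c n u v w"
definition S_coef where
  "S_coef c n u v w = u\<^sup>2 * F_uu c n u v w + 2 * u * v * F_uv c n u v w + v\<^sup>2 * F_vv c n u v w"

text \<open>The quadratic form Q at the point p = (u,v,w), evaluated at xi = (a,b,d) = (du,dv,dw).\<close>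
definition Qform :: "(nat \<Rightarrow> nat \<Rightarrow> real) \<Rightarrow> nat \<Rightarrow> real \<times> real \<times> real \<Rightarrow> real \<times> real \<times> real \<Rightarrow> real" where
  "Qform c n p xi = (case p of (u, v, w) \<Rightarrow> case xi of (a, b, d) \<Rightarrow>
      w\<^sup>2 * F_uu c n u v w * a\<^sup>2 + 2 * w\<^sup>2 * F_uv c n u v w * a * b + w\<^sup>2 * F_vv c n u v w * b\<^sup>2
      + 2 * w * A_coef c n u v w * a * d + 2 * w * B_coef c n u v w * b * d
      + S_coef c n u v w * d\<^sup>2)"

definition sphere2 :: "(real \<times> real \<times> real) set" where
  "sphere2 = {(u, v, w). u\<^sup>2 + v\<^sup>2 + w\<^sup>2 = 1}"

definition tangent_S2 :: "real \<times> real \<times> real \<Rightarrow> real \<times> real \<times> real \<Rightarrow> bool" where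
  "tangent_S2 p xi = (case p of (u, v, w) \<Rightarrow> case xi of (a, b, d) \<Rightarrow> u * a + v * b + w * d = 0)"

text \<open>Singular point of the line fields Y_1, Y_2 (the same for k = 1, 2):
  Q_p restricted to T_p S^2 vanishes identically.\<close>
definition singular_point :: "(nat \<Rightarrow> nat \<Rightarrow> real) \<Rightarrow> nat \<Rightarrow> real \<times> real \<times> real \<Rightarrow> bool" where
  "singular_point c n p \<longleftrightarrow> p \<in> sphere2 \<and> (\<forall>xi. tangent_S2 p xi \<longrightarrow> Qform c n p xi = 0)"

definition singular_point_at_infinity where
  "singular_point_at_infinity c n p \<longleftrightarrow> singular_point c n p \<and> snd (snd p) = 0"

end

theory Submission
  imports Defs
begin

lemma deriv_psum:
  fixes a :: "nat \<Rightarrow> real"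
  assumes "finite A"
  shows "deriv (\<lambda>t. \<Sum>i\<in>A. a i * t ^ (e i)) s = (\<Sum>i\<in>A. a i * (of_nat (e i) * s ^ (e i - 1)))"
  apply (rule DERIV_imp_deriv)
  apply (rule derivative_eq_intros | rule assms | simp)+
  apply (simp add: mult_ac)
  done

lemma Fext0: "Fext c n u v 0 = fhom c n u v"
proof -
  have "Fext c n u v 0 = (\<Sum>k\<le>n. (if k = n then fhom c n u v else 0))"
    unfolding Fext_def by (rule sum.cong) auto
  also have "\<dots> = fhom c n u v" by simp
  finally show ?thesis .
qed

lemma Fuu0: "F_uu c n u v 0 = (\<Sum>i\<le>n. c i (n-i) * v^(n-i) * of_nat i * (of_nat (i - 1) * u ^ (i - 1 - 1)))"
proof -
  have e1: "(\<lambda>t. Fext c n t v 0) = (\<lambda>t. \<Sum>i\<le>n. (c i (n-i) * v^(n-i)) * t ^ i)"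
    by (rule ext) (simp add: Fext0 fhom_def mult_ac)
  have e2: "(\<lambda>s. deriv (\<lambda>t. Fext c n t v 0) s) = (\<lambda>s. \<Sum>i\<le>n. (c i (n-i) * v^(n-i) * of_nat i) * s ^ (i - 1))"
    by (rule ext) (simp only: e1 deriv_psum[OF finite_atMost], simp add: mult_ac)
  show ?thesis unfolding F_uu_def e2 by (simp add: deriv_psum)
qed

lemma Fuv0: "F_uv c n u v 0 = (\<Sum>i\<le>n. c i (n-i) * of_nat i * u^(i-1) * (of_nat (n - i) * v ^ (n - i - 1)))"
proof -
  have e1: "\<And>s. (\<lambda>t. Fext c n t s 0) = (\<lambda>t. \<Sum>i\<le>n. (c i (n-i) * s^(n-i)) * t ^ i)"
    by (rule ext) (simp add: Fext0 fhom_def mult_ac)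
  have e2: "(\<lambda>s. deriv (\<lambda>t. Fext c n t s 0) u) = (\<lambda>s. \<Sum>i\<le>n. (c i (n-i) * of_nat i * u^(i-1)) * s ^ (n - i))"
    by (rule ext) (simp only: e1 deriv_psum[OF finite_atMost], simp add: mult_ac)
  show ?thesis unfolding F_uv_def e2 by (simp add: deriv_psum)
qed

lemma Fvv0: "F_vv c n u v 0 = (\<Sum>i\<le>n. c i (n-i) * u^i * of_nat (n-i) * (of_nat (n - i - 1) * v ^ (n - i - 1 - 1)))"
proof -
  have e1: "(\<lambda>t. Fext c n u t 0) = (\<lambda>t. \<Sum>i\<le>n. (c i (n-i) * u^i) * t ^ (n-i))"
    by (rule ext) (simp add: Fext0 fhom_def mult_ac)
  have e2: "(\<lambda>s. deriv (\<lambda>t. Fext c n u t 0) s) = (\<lambda>s. \<Sum>i\<le>n. (c i (n-i) * u^i * of_nat (n-i)) * s ^ (n - i - 1))"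
    by (rule ext) (simp only: e1 deriv_psum[OF finite_atMost], simp add: mult_ac)
  show ?thesis unfolding F_vv_def e2 by (simp add: deriv_psum)
qed

lemma pow_aux1: "(x::real)^2 * (of_nat (i - 1) * x ^ (i - 1 - 1)) * of_nat i = of_nat i * (of_nat i - 1) * x ^ i"
  by (cases i; cases "i - 1") (auto simp: power2_eq_square algebra_simps)

lemma pow_aux2: "(x::real) * (of_nat i * x ^ (i - 1)) = of_nat i * x ^ i"
  by (cases i) auto

lemma S0: "S_coef c n u v 0 = real n * (real n - 1) * fhom c n u v"
proof -
  have "S_coef c n u v 0 = (\<Sum>i\<le>n. c i (n-i) * u^i * v^(n-i) *
      (of_nat i * (of_nat i - 1) + 2 * (of_nat i * of_nat (n-i)) + of_nat (n-i) * (of_nat (n-i) - 1)))"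
    unfolding S_coef_def Fuu0 Fuv0 Fvv0 sum_distrib_left sum.distrib[symmetric]
  proof (rule sum.cong[OF refl])
    fix i assume "i \<in> {..n}"
    have a: "u\<^sup>2 * (c i (n - i) * v ^ (n - i) * real i * (real (i - 1) * u ^ (i - 1 - 1)))
        = c i (n - i) * v ^ (n - i) * (u\<^sup>2 * (real (i - 1) * u ^ (i - 1 - 1)) * real i)"
      by (simp add: mult_ac)
    have b: "2 * u * v * (c i (n - i) * real i * u ^ (i - 1) * (real (n - i) * v ^ (n - i - 1)))
        = 2 * c i (n - i) * (u * (real i * u ^ (i - 1))) * (v * (real (n - i) * v ^ (n - i - 1)))"
      by (simp add: mult_ac)
    have cc: "v\<^sup>2 * (c i (n - i) * u ^ i * real (n - i) * (real (n - i - 1) * v ^ (n - i - 1 - 1)))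
        = c i (n - i) * u ^ i * (v\<^sup>2 * (real (n - i - 1) * v ^ (n - i - 1 - 1)) * real (n - i))"
      by (simp add: mult_ac)
    show "u\<^sup>2 * (c i (n - i) * v ^ (n - i) * real i * (real (i - 1) * u ^ (i - 1 - 1))) +
         2 * u * v * (c i (n - i) * real i * u ^ (i - 1) * (real (n - i) * v ^ (n - i - 1))) +
         v\<^sup>2 * (c i (n - i) * u ^ i * real (n - i) * (real (n - i - 1) * v ^ (n - i - 1 - 1))) =
         c i (n - i) * u ^ i * v ^ (n - i) *
         (real i * (real i - 1) + 2 * (real i * real (n - i)) + real (n - i) * (real (n - i) - 1))"
      unfolding a b cc pow_aux1 pow_aux2 by (simp add: algebra_simps)
  qed
  also have "\<dots> = (\<Sum>i\<le>n. (real n * (real n - 1)) * (c i (n-i) * u^i * v^(n-i)))"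
  proof (rule sum.cong[OF refl])
    fix i assume "i \<in> {..n}"
    then have "real (n - i) = real n - real i" by (simp add: of_nat_diff)
    then show "c i (n-i) * u^i * v^(n-i) *
      (of_nat i * (of_nat i - 1) + 2 * (of_nat i * of_nat (n-i)) + of_nat (n-i) * (of_nat (n-i) - 1))
      = (real n * (real n - 1)) * (c i (n-i) * u^i * v^(n-i))"
      by (simp add: algebra_simps)
  qed
  also have "\<dots> = real n * (real n - 1) * fhom c n u v"
    unfolding fhom_def sum_distrib_left by simp
  finally show ?thesis .
qed

theorem corollary1:
  fixes c :: "nat \<Rightarrow> nat \<Rightarrow> real" and n :: nat
  assumes "poly2_degree c n" and "n \<ge> 3"
  shows "{p. singular_point_at_infinity c n p} = {(u, v, w) \<in> sphere2. w = 0 \<and> fhom c n u v = 0}"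
proof (rule set_eqI)
  fix p :: "real \<times> real \<times> real"
  obtain u v w where p: "p = (u, v, w)" by (cases p) auto
  have nz: "real n * (real n - 1) \<noteq> 0" using assms(2) by simp
  show "p \<in> {p. singular_point_at_infinity c n p} \<longleftrightarrow> p \<in> {(u, v, w) \<in> sphere2. w = 0 \<and> fhom c n u v = 0}"
  proof
    assume "p \<in> {p. singular_point_at_infinity c n p}"
    then have sp: "p \<in> sphere2" "w = 0" "\<forall>xi. tangent_S2 p xi \<longrightarrow> Qform c n p xi = 0"
      unfolding singular_point_at_infinity_def singular_point_def by (auto simp: p)
    have "tangent_S2 p (0,0,1)" using sp(2) by (simp add: p tangent_S2_def)
    with sp(3) have "Qform c n p (0,0,1) = 0" by blast
    then have "S_coef c n u v 0 = 0" using sp(2) by (simp add: p Qform_def)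
    then have "fhom c n u v = 0" using nz by (simp add: S0)
    then show "p \<in> {(u, v, w) \<in> sphere2. w = 0 \<and> fhom c n u v = 0}" using sp by (simp add: p)
  next
    assume "p \<in> {(u, v, w) \<in> sphere2. w = 0 \<and> fhom c n u v = 0}"
    then have h: "p \<in> sphere2" "w = 0" "fhom c n u v = 0" by (auto simp: p)
    have "S_coef c n u v 0 = 0" using h(3) by (simp add: S0)
    then have "\<forall>xi. tangent_S2 p xi \<longrightarrow> Qform c n p xi = 0"
      using h(2) by (auto simp: p Qform_def)
    then show "p \<in> {p. singular_point_at_infinity c n p}"
      using h unfolding singular_point_at_infinity_def singular_point_def by (simp add: p)
  qed
qed

end
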